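(* Let $A,Q\in\mathbb{R}^{n\times n}$, $B,L\in\mathbb{R}^{n\times m}$, $R\in\mathbb{R}^{m\times m}$, and $A_0^i\in\mathbb{R}^{n\times n}$, $B_0^i\in\mathbb{R}^{n\times m}$ for $i=1,\dots,r$, such that $R\succ 0$ and $\begin{bmatrix} Q & L\\ L^{\mathsf T} & R\end{bmatrix}\succeq 0$ (symmetric positive semidefinite). Suppose that $$\mathcal N(Q-LR^{-1}L^{\mathsf T})\subseteq \mathcal N(L^{\mathsf T})\cap\bigcap_{i=1}^r\mathcal N(A_0^i).$$ If $(Q-LR^{-1}L^{\mathsf T},A)$ is detectable, then for every symmetric positive semidefinite $\widetilde X\in\mathbb{R}^{n\times n}$ the pair $\big(H_{\mathrm c}(\widetilde X),A_{\mathrm c}(\widetilde X)\big)$ is detectable and $H_{\mathrm c}(\widetilde X)\succeq 0$.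
   Context: $\mathcal N(\cdot)$ denotes the null space. For symmetric $X\in\mathbb{R}^{n\times n}$ define $\Pi_{11}(X)=\sum_{i=1}^r (A_0^i)^{\mathsf T}XA_0^i$, $\Pi_{12}(X)=\sum_{i=1}^r (A_0^i)^{\mathsf T}XB_0^i$, $\Pi_{22}(X)=\sum_{i=1}^r (B_0^i)^{\mathsf T}XB_0^i$, $L_{\mathrm c}(X)=L+\Pi_{12}(X)$, $R_{\mathrm c}(X)=R+\Pi_{22}(X)$, $Q_{\mathrm c}(X)=Q+\Pi_{11}(X)$, $A_{\mathrm c}(X)=A-B[R_{\mathrm c}(X)]^{-1}[L_{\mathrm c}(X)]^{\mathsf T}$, $H_{\mathrm c}(X)=Q_{\mathrm c}(X)-L_{\mathrm c}(X)[R_{\mathrm c}(X)]^{-1}[L_{\mathrm c}(X)]^{\mathsf T}$. A pair $(H,A)$ of $n\times n$ matrices is detectable if there is no nonzero $z\in\mathbb{C}^n$ and $\lambda\in\mathbb{C}$ with $\mathrm{Re}(\lambda)\ge0$ such that $(A-\lambda I)z=0$ and $Hz=0$. *)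

theory Defs
  imports "HOL-Analysis.Analysis"
begin

definition cmat :: "real^'c^'r \<Rightarrow> complex^'c^'r" where
  "cmat M = (\<chi> i j. complex_of_real (M $ i $ j))"

definition symmetric_mat :: "real^'n^'n \<Rightarrow> bool" where
  "symmetric_mat M \<longleftrightarrow> transpose M = M"

definition psd :: "real^'n^'n \<Rightarrow> bool" where
  "psd M \<longleftrightarrow> symmetric_mat M \<and> (\<forall>x. 0 \<le> x \<bullet> (M *v x))"

definition pd :: "real^'n^'n \<Rightarrow> bool" where
  "pd M \<longleftrightarrow> symmetric_mat M \<and> (\<forall>x. x \<noteq> 0 \<longrightarrow> 0 < x \<bullet> (M *v x))"

definition null_space :: "real^'c^'r \<Rightarrow> (real^'c) set" where
  "null_space M = {x. M *v x = 0}"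

definition block_mat :: "real^'n^'n \<Rightarrow> real^'m^'n \<Rightarrow> real^'m^'m \<Rightarrow> real^('n + 'm)^('n + 'm)" where
  "block_mat Q L R = (\<chi> i j. case i of
      Inl a \<Rightarrow> (case j of Inl b \<Rightarrow> Q $ a $ b | Inr b \<Rightarrow> L $ a $ b)
    | Inr a \<Rightarrow> (case j of Inl b \<Rightarrow> L $ b $ a | Inr b \<Rightarrow> R $ a $ b))"

definition detectable :: "real^'n^'n \<Rightarrow> real^'n^'n \<Rightarrow> bool" where
  "detectable H A \<longleftrightarrow> \<not> (\<exists>(z::complex^'n) (l::complex). z \<noteq> 0 \<and> 0 \<le> Re l \<and>
      (cmat A - (\<chi> i j. if i = j then l else 0)) *v z = 0 \<and> cmat H *v z = 0)"

definition Pi11 :: "nat \<Rightarrow> (nat \<Rightarrow> real^'n^'n) \<Rightarrow> real^'n^'n \<Rightarrow> real^'n^'n" where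
  "Pi11 r A0 X = (\<Sum>i=1..r. transpose (A0 i) ** X ** A0 i)"
definition Pi12 :: "nat \<Rightarrow> (nat \<Rightarrow> real^'n^'n) \<Rightarrow> (nat \<Rightarrow> real^'m^'n) \<Rightarrow> real^'n^'n \<Rightarrow> real^'m^'n" where
  "Pi12 r A0 B0 X = (\<Sum>i=1..r. transpose (A0 i) ** X ** B0 i)"
definition Pi22 :: "nat \<Rightarrow> (nat \<Rightarrow> real^'m^'n) \<Rightarrow> real^'n^'n \<Rightarrow> real^'m^'m" where
  "Pi22 r B0 X = (\<Sum>i=1..r. transpose (B0 i) ** X ** B0 i)"

definition Lc where "Lc L r A0 B0 X = L + Pi12 r A0 B0 X"
definition Rc where "Rc R r B0 X = R + Pi22 r B0 X"
definition Qc where "Qc Q r A0 X = Q + Pi11 r A0 X"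

definition Ac :: "real^'n^'n \<Rightarrow> real^'m^'n \<Rightarrow> real^'m^'n \<Rightarrow> real^'m^'m \<Rightarrow> nat \<Rightarrow>
   (nat \<Rightarrow> real^'n^'n) \<Rightarrow> (nat \<Rightarrow> real^'m^'n) \<Rightarrow> real^'n^'n \<Rightarrow> real^'n^'n" where
  "Ac A B L R r A0 B0 X = A - B ** matrix_inv (Rc R r B0 X) ** transpose (Lc L r A0 B0 X)"

definition Hc :: "real^'n^'n \<Rightarrow> real^'m^'n \<Rightarrow> real^'m^'m \<Rightarrow> nat \<Rightarrow>
   (nat \<Rightarrow> real^'n^'n) \<Rightarrow> (nat \<Rightarrow> real^'m^'n) \<Rightarrow> real^'n^'n \<Rightarrow> real^'n^'n" where
  "Hc Q L R r A0 B0 X = Qc Q r A0 X - Lc L r A0 B0 X ** matrix_inv (Rc R r B0 X) ** transpose (Lc L r A0 B0 X)"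

end

theory Submission
  imports Defs
begin


lemma inv_props:
  fixes S :: "real^'n^'n"
  assumes "invertible S"
  shows "S ** matrix_inv S = mat 1 \<and> matrix_inv S ** S = mat 1"
  using assms unfolding invertible_def matrix_inv_def by (rule someI_ex)

lemma pd_invertible:
  fixes S :: "real^'n^'n"
  assumes "pd S" shows "invertible S"
proof -
  have "\<forall>x. S *v x = 0 \<longrightarrow> x = 0"
    using assms unfolding pd_def by (metis inner_zero_right less_irrefl)
  then show ?thesis using invertible_left_inverse matrix_left_invertible_ker by blast
qed

lemma inv_sym:
  fixes S :: "real^'n^'n"
  assumes "invertible S" "transpose S = S"
  shows "transpose (matrix_inv S) = matrix_inv S"
proof -
  let ?Si = "matrix_inv S"
  have 1: "S ** ?Si = mat 1" "?Si ** S = mat 1" using inv_props[OF assms(1)] by auto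
  have "transpose ?Si ** S = mat 1"
    using arg_cong[OF 1(1), of transpose] assms(2) by (simp add: matrix_transpose_mul)
  have "transpose ?Si = transpose ?Si ** (S ** ?Si)" by (simp add: 1)
  also have "\<dots> = (transpose ?Si ** S) ** ?Si" by (rule matrix_mul_assoc)
  also have "\<dots> = ?Si" using \<open>transpose ?Si ** S = mat 1\<close> by (simp add: matrix_mul_lid)
  finally show ?thesis .
qed

lemma dot_tr:
  fixes M :: "real^'c^'r"
  shows "x \<bullet> (M *v y) = (transpose M *v x) \<bullet> y"
  by (simp add: dot_lmul_matrix)

lemma transpose_add': "transpose (A + B) = transpose A + transpose (B::real^'c^'r)"
  by (simp add: transpose_def vec_eq_iff)
lemma transpose_diff': "transpose (A - B) = transpose A - transpose (B::real^'c^'r)"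
  by (simp add: transpose_def vec_eq_iff)

lemma transpose_sum': "transpose (sum (f :: 'i \<Rightarrow> real^'c^'r) I) = sum (\<lambda>i. transpose (f i)) I"
  by (induction I rule: infinite_finite_induct) (auto simp: transpose_add' transpose_def vec_eq_iff)

lemma sum_mv: "(sum (f :: 'i \<Rightarrow> real^'c^'r) I) *v x = sum (\<lambda>i. f i *v x) I"
  by (induction I rule: infinite_finite_induct) (auto simp: matrix_vector_mult_add_rdistrib)

lemma mv_scaleR: "(S::real^'c^'r) *v (t *\<^sub>R v) = t *\<^sub>R (S *v v)"
  by (simp add: vec_eq_iff matrix_vector_mult_def sum_distrib_left algebra_simps)

lemma mv_neg: "(S::real^'c^'r) *v (- v) = - (S *v v)"
  by (simp add: vec_eq_iff matrix_vector_mult_def sum_negf)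

lemma psd_zero:
  fixes S :: "real^'n^'n"
  assumes "psd S" "x \<bullet> (S *v x) = 0"
  shows "S *v x = 0"
proof (rule ccontr)
  assume ne: "S *v x \<noteq> 0"
  let ?y = "S *v x"
  define a where "a = ?y \<bullet> ?y"
  define c where "c = ?y \<bullet> (S *v ?y)"
  have a: "a > 0" using ne unfolding a_def by simp
  have c: "c \<ge> 0" using assms(1) unfolding psd_def c_def by blast
  have sym: "transpose S = S" using assms(1) unfolding psd_def symmetric_mat_def by blast
  have xy: "x \<bullet> (S *v ?y) = a" unfolding a_def
    by (metis dot_tr sym)
  define t where "t = - a / (c + 1)"
  have "0 \<le> (x + t *\<^sub>R ?y) \<bullet> (S *v (x + t *\<^sub>R ?y))"
    using assms(1) unfolding psd_def by blast
  also have "\<dots> = x \<bullet> (S *v x) + t * (x \<bullet> (S *v ?y)) + t * (?y \<bullet> (S *v x)) + t * t * c"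
    unfolding c_def by (simp add: matrix_vector_right_distrib mv_scaleR inner_add_left inner_add_right algebra_simps)
  also have "\<dots> = 2 * t * a + t * t * c" using xy assms(2) unfolding a_def by simp
  finally have "0 \<le> 2 * t * a + t * t * c" .
  then have "0 \<le> (2 * t * a + t * t * c) * (c+1)^2" using c by simp
  also have "(2 * t * a + t * t * c) * (c+1)^2 = - a * a * (c + 2)"
  proof -
    have tc: "t * (c+1) = - a" unfolding t_def using c by simp
    have "(2 * t * a + t * t * c) * (c+1)^2 = 2 * a * (c+1) * (t * (c+1)) + c * (t*(c+1)) * (t*(c+1))"
      by (simp add: algebra_simps power2_eq_square)
    also have "\<dots> = - a * a * (c + 2)" unfolding tc by (simp add: algebra_simps)
    finally show ?thesis .
  qed
  finally have "0 \<le> - a * a * (c + 2)" .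
  moreover have "a * a * (c + 2) > 0" using a c by simp
  ultimately show False by linarith
qed


lemma dot_trT: "x \<bullet> (transpose (A::real^'c^'r) *v y) = (A *v x) \<bullet> y"
  using dot_tr[of x "transpose A" y] by simp

lemma quad_i:
  fixes A :: "real^'n^'n" and B :: "real^'m^'n" and X :: "real^'n^'n"
  assumes "transpose X = X"
  shows "x \<bullet> ((transpose A ** X ** A) *v x + (transpose A ** X ** B) *v u)
    + u \<bullet> (transpose (transpose A ** X ** B) *v x + (transpose B ** X ** B) *v u)
    = (A *v x + B *v u) \<bullet> (X *v (A *v x + B *v u))"
proof -
  have t: "transpose (transpose A ** X ** B) = transpose B ** X ** A"
    by (simp add: matrix_transpose_mul assms matrix_mul_assoc)
  show ?thesis unfolding t
    by (simp only: matrix_vector_mul_assoc[symmetric] dot_trT inner_add_left inner_add_right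
        matrix_vector_right_distrib matrix_vector_mult_add_rdistrib)
qed

lemma block_mv:
  fixes Q :: "real^'n^'n" and L :: "real^'m^'n" and R :: "real^'m^'m"
  shows "block_mat Q L R *v w = (\<chi> k. case k of
      Inl a \<Rightarrow> (Q *v (\<chi> a. w $ Inl a) + L *v (\<chi> b. w $ Inr b)) $ a
    | Inr b \<Rightarrow> (transpose L *v (\<chi> a. w $ Inl a) + R *v (\<chi> b. w $ Inr b)) $ b)"
proof -
  have U: "(UNIV :: ('n+'m) set) = UNIV <+> UNIV" by simp
  show ?thesis
    unfolding vec_eq_iff
    apply (rule allI)
    subgoal for k
      apply (subst matrix_vector_mult_def)
      apply (simp only: vec_lambda_beta)
      apply (subst U)
      apply (subst sum.Plus, simp, simp)
      apply (cases k)
       apply (simp_all add: block_mat_def matrix_vector_mult_def transpose_def o_def)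
      done
    done
qed

lemma inner_sumtype:
  fixes v w :: "real^('a::finite+'b::finite)"
  shows "v \<bullet> w = (\<chi> a. v$Inl a) \<bullet> (\<chi> a. w$Inl a) + (\<chi> b. v$Inr b) \<bullet> (\<chi> b. w$Inr b)"
proof -
  have U: "(UNIV :: ('a+'b) set) = UNIV <+> UNIV" by simp
  show ?thesis
    unfolding inner_vec_def
    apply (subst U)
    apply (subst sum.Plus, simp, simp)
    apply (simp add: o_def)
    done
qed

lemma cmv:
  fixes M :: "real^'c^'r" and z :: "complex^'c"
  shows "cmat M *v z = (\<chi> i. Complex ((M *v (\<chi> j. Re (z$j)))$i) ((M *v (\<chi> j. Im (z$j)))$i))"
  by (simp add: vec_eq_iff matrix_vector_mult_def cmat_def complex_eq_iff Re_sum Im_sum)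


lemma main:
  fixes A Q :: "real^'n^'n" and B L :: "real^'m^'n" and R :: "real^'m^'m"
    and r :: nat and A0 :: "nat \<Rightarrow> real^'n^'n" and B0 :: "nat \<Rightarrow> real^'m^'n"
    and X :: "real^'n^'n"
  assumes pdR: "pd R"
    and blk: "psd (block_mat Q L R)"
    and ns: "null_space (Q - L ** matrix_inv R ** transpose L)
           \<subseteq> null_space (transpose L) \<inter> (\<Inter>i\<in>{1..r}. null_space (A0 i))"
    and det: "detectable (Q - L ** matrix_inv R ** transpose L) A"
    and psdX: "psd X"
  shows "detectable (Hc Q L R r A0 B0 X) (Ac A B L R r A0 B0 X) \<and> psd (Hc Q L R r A0 B0 X)"
proof -
  define H where "H = Q - L ** matrix_inv R ** transpose L"
  define Qc' where "Qc' = Qc Q r A0 X"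
  define Lc' where "Lc' = Lc L r A0 B0 X"
  define Rc' where "Rc' = Rc R r B0 X"
  define Ri where "Ri = matrix_inv Rc'"
  define RiR where "RiR = matrix_inv R"
  define M0 where "M0 = block_mat Q L R"
  have symX: "transpose X = X" using psdX unfolding psd_def symmetric_mat_def by blast
  have symR: "transpose R = R" using pdR unfolding pd_def symmetric_mat_def by blast
  have symM0: "transpose M0 = M0" using blk unfolding M0_def psd_def symmetric_mat_def by blast
  have symQ: "transpose Q = Q"
  proof -
    have "\<forall>a b. Q $ a $ b = Q $ b $ a"
    proof (intro allI)
      fix a b
      have "transpose M0 $ Inl a $ Inl b = M0 $ Inl a $ Inl b" using symM0 by simp
      then show "Q $ a $ b = Q $ b $ a" by (simp add: transpose_def M0_def block_mat_def)
    qed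
    then show ?thesis by (simp add: transpose_def vec_eq_iff)
  qed
  have Xpos: "\<And>p. 0 \<le> p \<bullet> (X *v p)" using psdX unfolding psd_def by blast
  have symPi22: "transpose (Pi22 r B0 X) = Pi22 r B0 X"
    unfolding Pi22_def transpose_sum' by (simp add: matrix_transpose_mul symX matrix_mul_assoc)
  have symPi11: "transpose (Pi11 r A0 X) = Pi11 r A0 X"
    unfolding Pi11_def transpose_sum' by (simp add: matrix_transpose_mul symX matrix_mul_assoc)
  have symRc: "transpose Rc' = Rc'" unfolding Rc'_def Rc_def by (simp add: transpose_add' symR symPi22)
  have symQc: "transpose Qc' = Qc'" unfolding Qc'_def Qc_def by (simp add: transpose_add' symQ symPi11)
  have quadRc: "v \<bullet> (Rc' *v v) = v \<bullet> (R *v v) + (\<Sum>i=1..r. (B0 i *v v) \<bullet> (X *v (B0 i *v v)))" for v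
    unfolding Rc'_def Rc_def Pi22_def
    by (simp only: matrix_vector_mult_add_rdistrib sum_mv inner_add_right inner_sum_right
        matrix_vector_mul_assoc[symmetric] dot_trT)
  have pdRc: "pd Rc'"
    unfolding pd_def symmetric_mat_def
  proof (intro conjI allI impI symRc)
    fix v :: "real^'m" assume "v \<noteq> 0"
    then have "0 < v \<bullet> (R *v v)" using pdR unfolding pd_def by blast
    moreover have "0 \<le> (\<Sum>i=1..r. (B0 i *v v) \<bullet> (X *v (B0 i *v v)))" by (rule sum_nonneg) (rule Xpos)
    ultimately show "0 < v \<bullet> (Rc' *v v)" unfolding quadRc by linarith
  qed
  have invRc: "invertible Rc'" by (rule pd_invertible[OF pdRc])
  have Ri1: "Rc' ** Ri = mat 1" using inv_props[OF invRc] unfolding Ri_def by blast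
  have symRi: "transpose Ri = Ri" unfolding Ri_def by (rule inv_sym[OF invRc symRc])
  have invR: "invertible R" by (rule pd_invertible[OF pdR])
  have RiR1: "RiR ** R = mat 1" using inv_props[OF invR] unfolding RiR_def by blast
  have HcE: "Hc Q L R r A0 B0 X = Qc' - Lc' ** Ri ** transpose Lc'"
    unfolding Hc_def Qc'_def Lc'_def Rc'_def Ri_def ..
  have AcE: "Ac A B L R r A0 B0 X = A - B ** Ri ** transpose Lc'"
    unfolding Ac_def Lc'_def Rc'_def Ri_def ..
  have symHc: "transpose (Hc Q L R r A0 B0 X) = Hc Q L R r A0 B0 X"
    unfolding HcE by (simp add: transpose_diff' symQc matrix_transpose_mul symRi matrix_mul_assoc)
  define F where "F x u = x \<bullet> (Qc' *v x + Lc' *v u) + u \<bullet> (transpose Lc' *v x + Rc' *v u)" for x u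
  define q0 where "q0 x u = x \<bullet> (Q *v x + L *v u) + u \<bullet> (transpose L *v x + R *v u)" for x u
  have Fsplit: "F x u = q0 x u + (\<Sum>i=1..r. (A0 i *v x + B0 i *v u) \<bullet> (X *v (A0 i *v x + B0 i *v u)))" for x u
  proof -
    have "F x u = q0 x u + (\<Sum>i=1..r. x \<bullet> ((transpose (A0 i) ** X ** A0 i) *v x + (transpose (A0 i) ** X ** B0 i) *v u)
      + u \<bullet> (transpose (transpose (A0 i) ** X ** B0 i) *v x + (transpose (B0 i) ** X ** B0 i) *v u))"
      unfolding F_def q0_def Qc'_def Lc'_def Rc'_def Qc_def Lc_def Rc_def Pi11_def Pi12_def Pi22_def
      by (simp only: transpose_add' transpose_sum' matrix_vector_mult_add_rdistrib sum_mv
          inner_add_right inner_sum_right sum.distrib)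
    then show ?thesis by (simp only: quad_i[OF symX])
  qed
  define w where "w x u = ((\<chi> k. case k of Inl a \<Rightarrow> x $ a | Inr b \<Rightarrow> u $ b) :: real^('n+'m))" for x u
  have wl: "(\<chi> a. w x u $ Inl a) = x" "(\<chi> b. w x u $ Inr b) = u" for x u
    by (simp_all add: w_def vec_eq_iff)
  have q0w: "q0 x u = w x u \<bullet> (M0 *v w x u)" for x u
    unfolding M0_def block_mv
    by (subst inner_sumtype) (simp del: vector_add_component add: wl q0_def vec_lambda_eta)
  have q0pos: "0 \<le> q0 x u" for x u
    using blk unfolding q0w M0_def psd_def by blast
  have Fpos: "0 \<le> F x u" for x u
    unfolding Fsplit by (intro add_nonneg_nonneg q0pos sum_nonneg Xpos)
  define uu where "uu x = - (Ri *v (transpose Lc' *v x))" for x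
  have FHc: "F x (uu x) = x \<bullet> (Hc Q L R r A0 B0 X *v x)" for x
  proof -
    have 1: "transpose Lc' *v x + Rc' *v uu x = 0"
      unfolding uu_def by (simp del: transpose_matrix_vector add: mv_neg matrix_vector_mul_assoc matrix_mul_assoc Ri1 matrix_mul_lid)
    have 2: "Qc' *v x + Lc' *v uu x = Hc Q L R r A0 B0 X *v x"
      unfolding uu_def HcE by (simp del: transpose_matrix_vector add: mv_neg matrix_vector_mult_diff_rdistrib matrix_vector_mul_assoc matrix_mul_assoc)
    show ?thesis unfolding F_def 1 2 by simp
  qed
  have psdHc: "psd (Hc Q L R r A0 B0 X)"
    unfolding psd_def symmetric_mat_def using symHc Fpos FHc by metis
  have K: "transpose Lc' *v x = 0 \<and> H *v x = 0" if hx: "Hc Q L R r A0 B0 X *v x = 0" for x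
  proof -
    let ?u = "uu x"
    have "F x ?u = 0" unfolding FHc hx by simp
    moreover have "0 \<le> (\<Sum>i=1..r. (A0 i *v x + B0 i *v ?u) \<bullet> (X *v (A0 i *v x + B0 i *v ?u)))"
      by (intro sum_nonneg Xpos)
    ultimately have "q0 x ?u = 0"
      unfolding Fsplit using q0pos[of x ?u] by linarith
    then have "M0 *v w x ?u = 0" using psd_zero[of M0] blk unfolding q0w M0_def by blast
    then have e: "Q *v x + L *v ?u = 0" "transpose L *v x + R *v ?u = 0"
      unfolding M0_def block_mv wl by (auto simp: vec_eq_iff split: sum.splits)
    have "?u = RiR *v (R *v ?u)" by (simp add: matrix_vector_mul_assoc RiR1)
    also have "R *v ?u = - (transpose L *v x)" using e(2) by (simp add: eq_neg_iff_add_eq_0 add.commute)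
    finally have "?u = - (RiR *v (transpose L *v x))" by (simp add: mv_neg)
    then have "L *v ?u = - (L *v (RiR *v (transpose L *v x)))" by (simp add: mv_neg)
    then have "H *v x = Q *v x + L *v ?u"
      unfolding H_def RiR_def
      by (simp del: transpose_matrix_vector add: matrix_vector_mult_diff_rdistrib matrix_vector_mul_assoc matrix_mul_assoc)
    then have Hx: "H *v x = 0" using e(1) by simp
    then have "x \<in> null_space H" unfolding null_space_def by simp
    then have LT: "transpose L *v x = 0" and A0x: "\<And>i. i \<in> {1..r} \<Longrightarrow> A0 i *v x = 0"
      using ns unfolding H_def null_space_def by auto
    have "transpose Lc' *v x = transpose L *v x + (\<Sum>i=1..r. transpose (B0 i) *v (X *v (A0 i *v x)))"
      unfolding Lc'_def Lc_def Pi12_def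
      by (simp only: transpose_add' transpose_sum' matrix_vector_mult_add_rdistrib sum_mv
          matrix_transpose_mul symX matrix_vector_mul_assoc transpose_transpose)
    also have "\<dots> = 0" using LT A0x by simp
    finally show ?thesis using Hx by simp
  qed
  have detc: "detectable (Hc Q L R r A0 B0 X) (Ac A B L R r A0 B0 X)"
    unfolding detectable_def
  proof (rule notI, elim exE conjE)
    fix z :: "complex^'n" and l :: complex
    assume z0: "z \<noteq> 0" and l0: "0 \<le> Re l"
      and ev: "(cmat (Ac A B L R r A0 B0 X) - (\<chi> i j. if i = j then l else 0)) *v z = 0"
      and hz: "cmat (Hc Q L R r A0 B0 X) *v z = 0"
    define x where "x = (\<chi> j. Re (z$j))"
    define y where "y = (\<chi> j. Im (z$j))"
    have hxy: "Hc Q L R r A0 B0 X *v x = 0" "Hc Q L R r A0 B0 X *v y = 0"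
      using hz unfolding cmv x_def[symmetric] y_def[symmetric]
      by (auto simp: vec_eq_iff complex_eq_iff)
    have Kx: "transpose Lc' *v x = 0 \<and> H *v x = 0" by (rule K[OF hxy(1)])
    have Ky: "transpose Lc' *v y = 0 \<and> H *v y = 0" by (rule K[OF hxy(2)])
    have Acx: "Ac A B L R r A0 B0 X *v x = A *v x" "Ac A B L R r A0 B0 X *v y = A *v y"
      unfolding AcE using Kx Ky
      by (simp_all add: matrix_vector_mult_diff_rdistrib matrix_vector_mul_assoc[symmetric])
    have cA: "cmat (Ac A B L R r A0 B0 X) *v z = cmat A *v z"
      unfolding cmv x_def[symmetric] y_def[symmetric] Acx ..
    have cH: "cmat H *v z = 0"
      unfolding cmv x_def[symmetric] y_def[symmetric] using Kx Ky by (simp add: vec_eq_iff complex_eq_iff)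
    have "(cmat A - (\<chi> i j. if i = j then l else 0)) *v z = 0"
      using ev by (simp add: matrix_vector_mult_diff_rdistrib cA)
    then show False using det z0 l0 cH unfolding detectable_def H_def by blast
  qed
  show ?thesis using detc psdHc by blast
qed



theorem lemma2p2:
  fixes A Q :: "real^'n^'n" and B L :: "real^'m^'n" and R :: "real^'m^'m"
    and r :: nat and A0 :: "nat \<Rightarrow> real^'n^'n" and B0 :: "nat \<Rightarrow> real^'m^'n"
  assumes "pd R"
    and "psd (block_mat Q L R)"
    and "null_space (Q - L ** matrix_inv R ** transpose L)
           \<subseteq> null_space (transpose L) \<inter> (\<Inter>i\<in>{1..r}. null_space (A0 i))"
    and "detectable (Q - L ** matrix_inv R ** transpose L) A"
  shows "\<forall>X::real^'n^'n. psd X \<longrightarrow>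
           detectable (Hc Q L R r A0 B0 X) (Ac A B L R r A0 B0 X) \<and> psd (Hc Q L R r A0 B0 X)"
  using main[OF assms] by blast

end
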